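(* Given $x_0\in\mathbb{R}^{n_x}$ and a control $u\in U$, for every $t\in[0,T]$ the map $(y_1,\dots,y_T)\mapsto x(t)$ from $(\mathbb{R}^{n_y})^T$ to $\mathbb{R}^{n_x}$ is continuous, where $x$ denotes the solution of the hybrid system below starting at $x(0)=x_0$.
   Context: Fix positive integers $T,m,n_x,n_y$ and $\rho_{\max}\in(0,\infty)$; $B(0,\rho_{\max})$ is the closed Euclidean ball of radius $\rho_{\max}$ in $\mathbb{R}^m$; $U$ is the set of piecewise continuous $u:[0,T]\to\mathbb{R}^m$ with $\|u(t)\|_2\le\rho_{\max}$ for all $t$. $f:\mathbb{R}^{n_x}\times\mathbb{R}^m\to\mathbb{R}^{n_x}$ is continuously differentiable and there is $K_1\in[1,\infty)$ with $\|f(x',u')-f(x'',u'')\|_2\le K_1(\|x'-x''\|_2+\|u'-u''\|_2)$ for all $x',x''\in\mathbb{R}^{n_x}$, $u',u''\in B(0,\rho_{\max})$. $g:\mathbb{R}^{n_x}\times\mathbb{R}^{n_y}\to\mathbb{R}^{n_x}$ is continuous and differentiable in its first argument, and there are $K_2,\dots,K_5\ge0$ and positive integers $L_1,L_2$ such that for all $x,y$ both $\|g(x,y)\|_2$ and $\|\frac{\partial}{\partial x}g(x,y)\|_2$ are at most $K_2+K_3\|x\|_2^{L_1}+K_4\|y\|_2^{L_2}+K_5\|x\|_2^{L_1}\|y\|_2^{L_2}$. The hybrid system: $x_1$ on $[0,1]$ solves $\dot x_1=f(x_1,u)$, $x_1(0)=x_0$; for $i=2,\dots,T$, $x_i$ on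 $[i-1,i]$ solves $\dot x_i(t)=f(x_i(t),u(t))$ with $x_i(i-1)=g(x_{i-1}(i-1),y_{i-1})$; $x(t)=x_i(t)$ for $t\in[i-1,i)$, $i=1,\dots,T$, and $x(T)=g(x_T(T),y_T)$. *)

theory Defs
  imports "HOL-Analysis.Analysis"
begin

definition piecewise_continuous_on :: "real \<Rightarrow> real \<Rightarrow> (real \<Rightarrow> 'b::topological_space) \<Rightarrow> bool" where
  "piecewise_continuous_on a b u \<longleftrightarrow>
     (\<exists>S. finite S \<and> S \<subseteq> {a..b} \<and> continuous_on ({a..b} - S) u \<and>
        (\<forall>s\<in>S. (a < s \<longrightarrow> (\<exists>l. (u \<longlongrightarrow> l) (at_left s))) \<and>
                 (s < b \<longrightarrow> (\<exists>l. (u \<longlongrightarrow> l) (at_right s)))))"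

definition admissible_controls :: "nat \<Rightarrow> real \<Rightarrow> (real \<Rightarrow> real^'m) set" where
  "admissible_controls T \<rho> =
     {u. piecewise_continuous_on 0 (real T) u \<and> (\<forall>t\<in>{0..real T}. norm (u t) \<le> \<rho>)}"

text \<open>The family xs 1, ..., xs T of arcs of the hybrid system: xs i solves
  dx/dt = f(x,u) on [i-1,i] (in integral / Caratheodory form, as u is only piecewise
  continuous), xs 1 (0) = x0, and xs i (i-1) = g (xs (i-1) (i-1)) (y (i-1)).\<close>
definition hybrid_arcs ::
  "(real^'nx \<Rightarrow> real^'m \<Rightarrow> real^'nx) \<Rightarrow> (real^'nx \<Rightarrow> real^'ny \<Rightarrow> real^'nx) \<Rightarrow> nat \<Rightarrow>
   real^'nx \<Rightarrow> (real \<Rightarrow> real^'m) \<Rightarrow> (nat \<Rightarrow> real^'ny) \<Rightarrow> (nat \<Rightarrow> real \<Rightarrow> real^'nx) \<Rightarrow> bool" where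
  "hybrid_arcs f g T x0 u y xs \<longleftrightarrow>
     (\<forall>i\<in>{1..T}. continuous_on {real i - 1..real i} (xs i) \<and>
        (\<forall>t\<in>{real i - 1..real i}.
           ((\<lambda>s. f (xs i s) (u s)) has_integral (xs i t - xs i (real i - 1))) {real i - 1..t})) \<and>
     xs 1 0 = x0 \<and>
     (\<forall>i\<in>{2..T}. xs i (real i - 1) = g (xs (i - 1) (real i - 1)) (y (i - 1)))"

definition hybrid_state_of ::
  "(real^'nx \<Rightarrow> real^'ny \<Rightarrow> real^'nx) \<Rightarrow> nat \<Rightarrow> (nat \<Rightarrow> real^'ny) \<Rightarrow>
   (nat \<Rightarrow> real \<Rightarrow> real^'nx) \<Rightarrow> real \<Rightarrow> real^'nx" where
  "hybrid_state_of g T y xs t =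
     (if t = real T then g (xs T (real T)) (y T) else xs (nat \<lfloor>t\<rfloor> + 1) t)"

definition hybrid_solution ::
  "(real^'nx \<Rightarrow> real^'m \<Rightarrow> real^'nx) \<Rightarrow> (real^'nx \<Rightarrow> real^'ny \<Rightarrow> real^'nx) \<Rightarrow> nat \<Rightarrow>
   real^'nx \<Rightarrow> (real \<Rightarrow> real^'m) \<Rightarrow> (nat \<Rightarrow> real^'ny) \<Rightarrow> real \<Rightarrow> real^'nx" where
  "hybrid_solution f g T x0 u y t =
     (THE v. \<exists>xs. hybrid_arcs f g T x0 u y xs \<and> v = hybrid_state_of g T y xs t)"

end

theory Submission
  imports Defs
begin

lemma integ_lemma:
  fixes f :: "'a::euclidean_space \<Rightarrow> 'b::euclidean_space \<Rightarrow> 'a" and u :: "real \<Rightarrow> 'b"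
  assumes fc: "continuous_on UNIV (\<lambda>(x, v). f x v)"
    and lip: "\<forall>x' x'' u' u''. norm u' \<le> \<rho> \<longrightarrow> norm u'' \<le> \<rho> \<longrightarrow>
                  norm (f x' u' - f x'' u'') \<le> K * (norm (x' - x'') + norm (u' - u''))"
    and rho: "\<rho> > 0" and K: "K \<ge> 0"
    and pc: "piecewise_continuous_on 0 (real T) u" and ub: "\<forall>t\<in>{0..real T}. norm (u t) \<le> \<rho>"
    and cd: "0 \<le> c" "d \<le> real T" and xc: "continuous_on {c..d} x"
  shows "(\<lambda>s. f (x s) (u s)) integrable_on {c..d}"
proof -
  obtain S where S: "finite S" "continuous_on ({0..real T} - S) u"
    using pc unfolding piecewise_continuous_on_def by blast
  define S0 where "S0 = {c..d} - S"
  have "continuous_on S0 (\<lambda>s. (x s, u s))"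
    by (intro continuous_on_Pair continuous_on_subset[OF xc] continuous_on_subset[OF S(2)])
      (use cd in \<open>auto simp: S0_def\<close>)
  from continuous_on_compose2[OF fc this]
  have cont: "continuous_on S0 (\<lambda>s. f (x s) (u s))" by auto
  obtain B where B: "\<And>s. s \<in> {c..d} \<Longrightarrow> norm (x s) \<le> B"
    using compact_imp_bounded[OF compact_continuous_image[OF xc compact_Icc]]
    unfolding bounded_iff by force
  have bnd: "norm (f (x s) (u s)) \<le> norm (f 0 0) + K * (B + \<rho>)" if "s \<in> S0" for s
  proof -
    have s: "s \<in> {c..d}" "norm (u s) \<le> \<rho>" using that ub cd by (auto simp: S0_def)
    have "norm (f (x s) (u s) - f 0 0) \<le> K * (norm (x s - 0) + norm (u s - 0))"
      using lip s rho by (metis diff_zero norm_zero less_imp_le)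
    also have "\<dots> \<le> K * (B + \<rho>)" using B[OF s(1)] s K by (intro mult_left_mono) auto
    finally show ?thesis by (smt (verit) norm_triangle_ineq2)
  qed
  have meas: "S0 \<in> sets lebesgue" unfolding S0_def
    using S(1) by (intro sets.Diff) (auto intro: negligible_imp_sets)
  have "(\<lambda>s. f (x s) (u s)) absolutely_integrable_on S0"
    by (rule measurable_bounded_by_integrable_imp_absolutely_integrable[OF
          continuous_imp_measurable_on_sets_lebesgue[OF cont meas] meas, of "\<lambda>_. norm (f 0 0) + K * (B + \<rho>)"])
       (use bnd meas in \<open>auto simp: S0_def intro!: integrable_on_const bounded_set_imp_lmeasurable
          bounded_subset[OF bounded_closed_interval[of c d]]\<close>)
  then have "(\<lambda>s. f (x s) (u s)) integrable_on S0" using absolutely_integrable_on_def by blast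
  moreover have "negligible ((S0 - {c..d}) \<union> ({c..d} - S0))"
    by (rule negligible_subset[of S]) (use S(1) in \<open>auto simp: S0_def\<close>)
  ultimately show ?thesis using integrable_spike_set_eq by blast
qed

lemma bc_lemma:
  fixes h :: "real \<Rightarrow> 'a::real_normed_vector"
  assumes "continuous_on {a..b} h" "a \<le> b"
  shows "(\<lambda>t. h (max a (min b t))) \<in> bcontfun"
proof -
  have c: "continuous_on UNIV (\<lambda>t::real. max a (min b t))"
    by (intro continuous_intros)
  have "continuous_on UNIV (\<lambda>t. h (max a (min b t)))"
    by (rule continuous_on_compose2[OF assms(1) c]) (use assms(2) in auto)
  moreover have "range (\<lambda>t. h (max a (min b t))) \<subseteq> h ` {a..b}"
    using assms(2) by auto
  then have "bounded (range (\<lambda>t. h (max a (min b t))))"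
    using bounded_subset compact_imp_bounded[OF compact_continuous_image[OF assms(1) compact_Icc]]
    by blast
  ultimately show ?thesis unfolding bcontfun_def by auto
qed

lemma exp_integral:
  fixes lam C :: real
  assumes "lam > 0" "a \<le> t"
  shows "((\<lambda>s. C * exp (lam * (s - a))) has_integral (C / lam * (exp (lam * (t - a)) - 1))) {a..t}"
proof -
  have "((\<lambda>s. C * exp (lam * (s - a))) has_integral
        (C / lam * exp (lam * (t - a)) - C / lam * exp (lam * (a - a)))) {a..t}"
    apply (rule fundamental_theorem_of_calculus[OF assms(2)])
    apply (auto simp: has_real_derivative_iff_has_vector_derivative[symmetric] intro!: derivative_eq_intros)
    using assms(1) by auto
  then show ?thesis by (simp add: algebra_simps)
qed

lemma ode_solve:
  fixes f :: "'a::euclidean_space \<Rightarrow> 'b \<Rightarrow> 'a" and u :: "real \<Rightarrow> 'b"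
  assumes K: "K > 0" and ab: "a \<le> b"
    and lipx: "\<forall>x' x'' s. s \<in> {a..b} \<longrightarrow> norm (f x' (u s) - f x'' (u s)) \<le> K * norm (x' - x'')"
    and integ: "\<forall>x d. d \<le> b \<longrightarrow> continuous_on {a..d} x \<longrightarrow> (\<lambda>s. f (x s) (u s)) integrable_on {a..d}"
  shows "\<exists>sol. \<forall>z. continuous_on {a..b} (sol z) \<and> sol z a = z \<and>
     (\<forall>t\<in>{a..b}. ((\<lambda>s. f (sol z s) (u s)) has_integral (sol z t - sol z a)) {a..t}) \<and>
     (\<forall>x. continuous_on {a..b} x \<and> x a = z \<and>
          (\<forall>t\<in>{a..b}. ((\<lambda>s. f (x s) (u s)) has_integral (x t - x a)) {a..t}) \<longrightarrow>
          (\<forall>t\<in>{a..b}. x t = sol z t)) \<and>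
     (\<forall>z'. \<forall>t\<in>{a..b}. dist (sol z t) (sol z' t) \<le> 2 * exp (2 * K * (b - a)) * dist z z')"
proof -
  define lam where "lam = 2 * K"
  have lam: "lam > 0" using K by (simp add: lam_def)
  define cl where "cl t = max a (min b t)" for t
  define E where "E t = exp (lam * (t - a))" for t
  have E1: "E t \<ge> 1" if "a \<le> t" for t
    using that lam by (simp add: E_def)
  have Epos: "E t > 0" for t by (simp add: E_def)
  define F where "F w s = f (E s *\<^sub>R apply_bcontfun w s) (u s)" for w :: "real \<Rightarrow>\<^sub>C 'a" and s
  have cl_in: "cl t \<in> {a..b}" for t using ab by (auto simp: cl_def)
  have cl_id: "t \<in> {a..b} \<Longrightarrow> cl t = t" for t by (auto simp: cl_def)
  have contE: "continuous_on S E" for S unfolding E_def by (intro continuous_intros)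
  have Fint: "F w integrable_on {a..d}" if "d \<le> b" for w d
  proof -
    have "continuous_on {a..d} (\<lambda>s. E s *\<^sub>R apply_bcontfun w s)"
      by (intro continuous_intros contE continuous_on_subset[OF continuous_on_apply_bcontfun]) auto
    then show ?thesis using integ that unfolding F_def by blast
  qed
  define h where "h z w t = (1 / E t) *\<^sub>R (z + integral {a..t} (F w))" for z w t
  have hcont: "continuous_on {a..b} (h z w)" for z w
    unfolding h_def
    by (intro continuous_intros contE indefinite_integral_continuous_1 Fint order.refl)
      (use Epos in \<open>auto simp: less_le\<close>)
  define Psi where "Psi z w = Bcontfun (\<lambda>t. h z w (cl t))" for z w
  have Psi_ap: "apply_bcontfun (Psi z w) t = h z w (cl t)" for z w t
    unfolding Psi_def cl_def
    by (simp add: Bcontfun_inverse[OF bc_lemma[OF hcont ab]])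
  have contr: "dist (Psi z w) (Psi z' w') \<le> dist z z' + dist w w' / 2" for z z' w w'
  proof (rule dist_bound)
    fix t
    define \<tau> where "\<tau> = cl t"
    have \<tau>: "a \<le> \<tau>" "\<tau> \<le> b" using cl_in by (auto simp: \<tau>_def)
    define D where "D = dist w w'"
    have I1: "F w integrable_on {a..\<tau>}" "F w' integrable_on {a..\<tau>}" using Fint \<tau> by auto
    have bnd: "norm (F w s - F w' s) \<le> K * D * exp (lam * (s - a))" if "s \<in> {a..\<tau>}" for s
    proof -
      have "norm (F w s - F w' s) \<le> K * norm (E s *\<^sub>R apply_bcontfun w s - E s *\<^sub>R apply_bcontfun w' s)"
        using lipx that \<tau> unfolding F_def by auto
      also have "\<dots> = K * (E s * dist (apply_bcontfun w s) (apply_bcontfun w' s))"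
        using Epos[of s] by (simp add: dist_norm scaleR_diff_right[symmetric])
      also have "\<dots> \<le> K * (E s * D)"
        unfolding D_def using K Epos[of s] dist_bounded
        by (intro mult_left_mono) auto
      finally show ?thesis by (simp add: E_def mult_ac)
    qed
    have "norm (integral {a..\<tau>} (\<lambda>s. F w s - F w' s)) \<le> integral {a..\<tau>} (\<lambda>s. K * D * exp (lam * (s - a)))"
      by (rule integral_norm_bound_integral)
        (use I1 bnd exp_integral[OF lam \<tau>(1), of "K * D"] in \<open>auto intro: integrable_diff\<close>)
    also have "\<dots> = K * D / lam * (E \<tau> - 1)"
      using integral_unique[OF exp_integral[OF lam \<tau>(1), of "K * D"]] by (simp add: E_def del: integral_mult_right)
    also have "\<dots> = D / 2 * (E \<tau> - 1)" using K by (simp add: lam_def)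
    finally have ib: "norm (integral {a..\<tau>} (F w) - integral {a..\<tau>} (F w')) \<le> D / 2 * (E \<tau> - 1)"
      using integral_diff[OF I1] by simp
    have "dist (Psi z w t) (Psi z' w' t) = norm ((1 / E \<tau>) *\<^sub>R ((z - z') + (integral {a..\<tau>} (F w) - integral {a..\<tau>} (F w'))))"
      unfolding Psi_ap h_def \<tau>_def dist_norm by (simp add: algebra_simps)
    also have "\<dots> = (1 / E \<tau>) * norm ((z - z') + (integral {a..\<tau>} (F w) - integral {a..\<tau>} (F w')))"
      using Epos[of \<tau>] by simp
    also have "\<dots> \<le> (1 / E \<tau>) * (norm (z - z') + D / 2 * (E \<tau> - 1))"
    proof -
      have "norm ((z - z') + (integral {a..\<tau>} (F w) - integral {a..\<tau>} (F w'))) \<le> norm (z - z') + D / 2 * (E \<tau> - 1)"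
        by (rule order.trans[OF norm_triangle_ineq]) (use ib in simp)
      then show ?thesis using Epos[of \<tau>] by (intro mult_left_mono) auto
    qed
    also have "\<dots> = norm (z - z') / E \<tau> + D / 2 - D / 2 / E \<tau>"
      using Epos[of \<tau>] by (simp add: field_simps)
    also have "\<dots> \<le> norm (z - z') + D / 2"
    proof -
      have "norm (z - z') / E \<tau> \<le> norm (z - z')"
        using E1[OF \<tau>(1)] by (simp add: divide_le_eq mult_le_cancel_left1)
      moreover have "D / 2 / E \<tau> \<ge> 0" using Epos[of \<tau>] by (simp add: D_def)
      ultimately show ?thesis by linarith
    qed
    finally show "dist (Psi z w t) (Psi z' w' t) \<le> dist z z' + dist w w' / 2"
      by (simp add: D_def dist_norm)
  qed
  have fix_ex: "\<exists>!w. Psi z w = w" for z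
    by (rule banach_fix_type[where c="1/2"]) (use contr[where z=z and z'=z] in auto)
  define W where "W z = (THE w. Psi z w = w)" for z
  have W: "Psi z (W z) = W z" for z using theI'[OF fix_ex[of z]] by (simp add: W_def)
  have Wuniq: "Psi z w = w \<Longrightarrow> w = W z" for z w
    using fix_ex[of z] W[of z] by auto
  define sol where "sol z t = E t *\<^sub>R apply_bcontfun (W z) t" for z t
  have sol_eq: "sol z t = z + integral {a..t} (\<lambda>s. f (sol z s) (u s))" if "t \<in> {a..b}" for z t
  proof -
    have "sol z t = E t *\<^sub>R h z (W z) t"
      unfolding sol_def using W[of z] Psi_ap[of z "W z" t] cl_id[OF that] by metis
    also have "\<dots> = z + integral {a..t} (F (W z))"
      unfolding h_def using Epos[of t] by simp
    finally show ?thesis unfolding F_def sol_def by simp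
  qed
  have Ea: "E a = 1" by (simp add: E_def)
  have sol_a: "sol z a = z" for z using sol_eq[of a z] ab by simp
  have sol_cont: "continuous_on {a..b} (sol z)" for z
    unfolding sol_def by (intro continuous_intros contE continuous_on_subset[OF continuous_on_apply_bcontfun]) auto
  have sol_int: "((\<lambda>s. f (sol z s) (u s)) has_integral (sol z t - sol z a)) {a..t}" if "t \<in> {a..b}" for z t
  proof -
    have "(\<lambda>s. f (sol z s) (u s)) integrable_on {a..t}"
      using integ that continuous_on_subset[OF sol_cont[of z], of "{a..t}"] by auto
    then show ?thesis using sol_eq[OF that, of z] sol_a[of z]
      by (simp add: integrable_integral)
  qed
  have sol_uniq: "\<forall>t\<in>{a..b}. x t = sol z t"
    if x: "continuous_on {a..b} x" "x a = z" "\<forall>t\<in>{a..b}. ((\<lambda>s. f (x s) (u s)) has_integral (x t - x a)) {a..t}"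
    for x z
  proof -
    define hx where "hx t = (1 / E t) *\<^sub>R x t" for t
    have hxc: "continuous_on {a..b} hx" unfolding hx_def
      by (intro continuous_intros contE x(1)) (use Epos in \<open>auto simp: less_le\<close>)
    define w where "w = Bcontfun (\<lambda>t. hx (cl t))"
    have w_ap: "apply_bcontfun w t = hx (cl t)" for t
      unfolding w_def cl_def by (simp add: Bcontfun_inverse[OF bc_lemma[OF hxc ab]])
    have Fw: "F w s = f (x s) (u s)" if "s \<in> {a..b}" for s
      unfolding F_def w_ap hx_def cl_id[OF that] using Epos[of s] by simp
    have "Psi z w = w"
    proof (rule bcontfun_eqI)
      fix t
      have "integral {a..cl t} (F w) = integral {a..cl t} (\<lambda>s. f (x s) (u s))"
        by (rule integral_cong) (use Fw cl_in[of t] in auto)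
      also have "\<dots> = x (cl t) - x a" using x(3) cl_in[of t] integral_unique by blast
      finally show "apply_bcontfun (Psi z w) t = apply_bcontfun w t"
        unfolding Psi_ap w_ap h_def hx_def using x(2) by simp
    qed
    then have "w = W z" by (rule Wuniq)
    show ?thesis
    proof
      fix t assume t: "t \<in> {a..b}"
      have "sol z t = E t *\<^sub>R hx t" unfolding sol_def using \<open>w = W z\<close> w_ap[of t] cl_id[OF t] by simp
      then show "x t = sol z t" unfolding hx_def using Epos[of t] by simp
    qed
  qed
  have sol_lip: "dist (sol z t) (sol z' t) \<le> 2 * exp (2 * K * (b - a)) * dist z z'" if "t \<in> {a..b}" for z z' t
  proof -
    have "dist (W z) (W z') \<le> dist z z' + dist (W z) (W z') / 2"
      using contr[of z "W z" z' "W z'"] W[of z] W[of z'] by simp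
    then have D: "dist (W z) (W z') \<le> 2 * dist z z'" by simp
    have "dist (sol z t) (sol z' t) = E t * dist (apply_bcontfun (W z) t) (apply_bcontfun (W z') t)"
      unfolding sol_def dist_norm using Epos[of t]
      by (simp add: scaleR_diff_right[symmetric])
    also have "\<dots> \<le> E t * (2 * dist z z')"
      using Epos[of t] dist_bounded[of "W z" t "W z'"] D
      by (intro mult_left_mono) auto
    also have "\<dots> \<le> exp (2 * K * (b - a)) * (2 * dist z z')"
      using that K by (intro mult_right_mono) (auto simp: E_def lam_def)
    finally show ?thesis by simp
  qed
  show ?thesis
    by (rule exI[of _ sol]) (use sol_cont sol_a sol_int sol_uniq sol_lip in blast)
qed

theorem proposition5:
  fixes T :: nat and \<rho> :: real and K1 K2 K3 K4 K5 :: real and L1 L2 :: nat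
    and f :: "real^'nx \<Rightarrow> real^'m \<Rightarrow> real^'nx"
    and g :: "real^'nx \<Rightarrow> real^'ny \<Rightarrow> real^'nx"
    and x0 :: "real^'nx" and u :: "real \<Rightarrow> real^'m" and t :: real
  assumes T_pos: "T > 0"
    and rho_pos: "\<rho> > 0"
    and f_C1: "\<exists>f'. (\<forall>z. ((\<lambda>(x, v). f x v) has_derivative blinfun_apply (f' z)) (at z))
                    \<and> continuous_on UNIV f'"
    and K1: "K1 \<ge> 1"
    and f_lip: "\<forall>x' x'' u' u''. norm u' \<le> \<rho> \<longrightarrow> norm u'' \<le> \<rho> \<longrightarrow>
                  norm (f x' u' - f x'' u'') \<le> K1 * (norm (x' - x'') + norm (u' - u''))"
    and g_cont: "continuous_on UNIV (\<lambda>(x, y). g x y)"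
    and K_nonneg: "K2 \<ge> 0" "K3 \<ge> 0" "K4 \<ge> 0" "K5 \<ge> 0"
    and L_pos: "L1 > 0" "L2 > 0"
    and g_bounds: "\<exists>g'. \<forall>x y.
          ((\<lambda>\<xi>. g \<xi> y) has_derivative blinfun_apply (g' x y)) (at x) \<and>
          norm (g x y) \<le> K2 + K3 * norm x ^ L1 + K4 * norm y ^ L2 + K5 * norm x ^ L1 * norm y ^ L2 \<and>
          norm (g' x y) \<le> K2 + K3 * norm x ^ L1 + K4 * norm y ^ L2 + K5 * norm x ^ L1 * norm y ^ L2"
    and u_adm: "u \<in> admissible_controls T \<rho>"
    and t_in: "t \<in> {0..real T}"
  shows "\<forall>y. \<forall>\<epsilon>>0. \<exists>\<delta>>0. \<forall>y'. (\<forall>i\<in>{1..T}. dist (y' i) (y i) < \<delta>) \<longrightarrow>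
            dist (hybrid_solution f g T x0 u y' t) (hybrid_solution f g T x0 u y t) < \<epsilon>"
proof (intro allI impI)
  fix y :: "nat \<Rightarrow> real^'ny" and \<epsilon> :: real
  assume eps: "\<epsilon> > 0"
  obtain f' where f': "\<forall>z. ((\<lambda>(x, v). f x v) has_derivative blinfun_apply (f' z)) (at z)"
    using f_C1 by blast
  have fc: "continuous_on UNIV (\<lambda>(x, v). f x v)"
    by (intro continuous_at_imp_continuous_on ballI has_derivative_continuous) (use f' in blast)
  have pc: "piecewise_continuous_on 0 (real T) u" and ub: "\<forall>t\<in>{0..real T}. norm (u t) \<le> \<rho>"
    using u_adm by (auto simp: admissible_controls_def)
  have K1pos: "K1 > 0" using K1 by simp
  define C where "C = 2 * exp (2 * K1)"
  have Cpos: "C > 0" by (simp add: C_def)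
  define P where "P k sol \<longleftrightarrow> (\<forall>z. continuous_on {real k..real k + 1} (sol z) \<and> sol z (real k) = z \<and>
     (\<forall>t\<in>{real k..real k + 1}. ((\<lambda>s. f (sol z s) (u s)) has_integral (sol z t - sol z (real k))) {real k..t}) \<and>
     (\<forall>x. continuous_on {real k..real k + 1} x \<and> x (real k) = z \<and>
          (\<forall>t\<in>{real k..real k + 1}. ((\<lambda>s. f (x s) (u s)) has_integral (x t - x (real k))) {real k..t}) \<longrightarrow>
          (\<forall>t\<in>{real k..real k + 1}. x t = sol z t)) \<and>
     (\<forall>z'. \<forall>t\<in>{real k..real k + 1}. dist (sol z t) (sol z' t) \<le> C * dist z z'))" for k and sol :: "real^'nx \<Rightarrow> real \<Rightarrow> real^'nx"
  have "\<forall>k. \<exists>sol. k < T \<longrightarrow> P k sol"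
  proof (intro allI)
    fix k
    show "\<exists>sol. k < T \<longrightarrow> P k sol"
    proof (cases "k < T")
      case True
      have lipx: "\<forall>x' x'' s. s \<in> {real k..real k + 1} \<longrightarrow> norm (f x' (u s) - f x'' (u s)) \<le> K1 * norm (x' - x'')"
      proof (intro allI impI)
        fix x' x'' s assume s: "s \<in> {real k..real k + 1}"
        then have "s \<in> {0..real T}" using True by auto
        then have "norm (u s) \<le> \<rho>" using ub by auto
        then show "norm (f x' (u s) - f x'' (u s)) \<le> K1 * norm (x' - x'')"
          using f_lip by (metis add.right_neutral diff_self norm_zero)
      qed
      have integ: "\<forall>x d. d \<le> real k + 1 \<longrightarrow> continuous_on {real k..d} x \<longrightarrow> (\<lambda>s. f (x s) (u s)) integrable_on {real k..d}"
      proof (intro allI impI)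
        fix x :: "real \<Rightarrow> real^'nx" and d assume "d \<le> real k + 1" "continuous_on {real k..d} x"
        then show "(\<lambda>s. f (x s) (u s)) integrable_on {real k..d}"
          using True by (intro integ_lemma[OF fc f_lip rho_pos _ pc ub]) (use K1 in auto)
      qed
      from ode_solve[where f=f and u=u and a="real k" and b="real k + 1", OF K1pos _ lipx integ] show ?thesis by (auto simp: C_def P_def)
    qed auto
  qed
  from choice[OF this] obtain S where S0: "\<And>k. k < T \<Longrightarrow> P k (S k)"
    by blast
  have S_cont: "continuous_on {real k..real k + 1} (S k z)" if "k < T" for k z
    using S0[OF that] unfolding P_def by blast
  have S_a: "S k z (real k) = z" if "k < T" for k z
    using S0[OF that] unfolding P_def by blast
  have S_int: "((\<lambda>s. f (S k z s) (u s)) has_integral (S k z t - S k z (real k))) {real k..t}"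
    if "k < T" "t \<in> {real k..real k + 1}" for k z t
    using S0[OF that(1)] that(2) unfolding P_def by blast
  have S_uniq: "x t = S k z t" if "k < T" "continuous_on {real k..real k + 1} x" "x (real k) = z"
    "\<forall>t\<in>{real k..real k + 1}. ((\<lambda>s. f (x s) (u s)) has_integral (x t - x (real k))) {real k..t}"
    "t \<in> {real k..real k + 1}" for k z t x
  proof -
    have "\<forall>x. continuous_on {real k..real k + 1} x \<and> x (real k) = z \<and>
          (\<forall>t\<in>{real k..real k + 1}. ((\<lambda>s. f (x s) (u s)) has_integral (x t - x (real k))) {real k..t}) \<longrightarrow>
          (\<forall>t\<in>{real k..real k + 1}. x t = S k z t)"
      using S0[OF that(1)] unfolding P_def by blast
    then show ?thesis using that by blast
  qed
  have S_lip: "dist (S k z t) (S k z' t) \<le> C * dist z z'" if "k < T" "t \<in> {real k..real k + 1}" for k z z' t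
    using S0[OF that(1)] that(2) unfolding P_def by blast
  define Y where "Y yy = rec_nat (S 0 x0) (\<lambda>k Yk. S (Suc k) (g (Yk (real (Suc k))) (yy (Suc k))))" for yy :: "nat \<Rightarrow> real^'ny"
  have Y0: "Y yy 0 = S 0 x0" for yy by (simp add: Y_def)
  have YS: "Y yy (Suc k) = S (Suc k) (g (Y yy k (real (Suc k))) (yy (Suc k)))" for yy k by (simp add: Y_def)
  define V where "V yy = hybrid_state_of g T yy (\<lambda>i. Y yy (i - 1)) t" for yy
  have arcs: "hybrid_arcs f g T x0 u yy (\<lambda>i. Y yy (i - 1))" for yy
    unfolding hybrid_arcs_def
  proof (intro conjI ballI)
    fix i assume i: "i \<in> {1..T}"
    then obtain k where k: "i = Suc k" "k < T" by (cases i) auto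
    have rk: "real i - 1 = real k" using k by auto
    have rk2: "real i = real k + 1" using k by auto
    obtain z where z: "Y yy k = S k z" by (cases k) (auto simp: Y0 YS)
    have Yi: "Y yy (i - 1) = S k z" using k z by simp
    show "continuous_on {real i - 1..real i} (Y yy (i - 1))"
      unfolding rk unfolding Yi rk2 by (rule S_cont[OF k(2)])
    fix t assume "t \<in> {real i - 1..real i}"
    then have t: "t \<in> {real k..real k + 1}" unfolding rk unfolding rk2 .
    show "((\<lambda>s. f (Y yy (i - 1) s) (u s)) has_integral Y yy (i - 1) t - Y yy (i - 1) (real i - 1)) {real i - 1..t}"
      unfolding rk Yi by (rule S_int[OF k(2) t])
  next
    show "Y yy (1 - 1) 0 = x0" using S_a[of 0] T_pos by (simp add: Y0)
  next
    fix i assume i: "i \<in> {2..T}"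
    define j where "j = i - 2"
    have j: "i = Suc (Suc j)" using i by (auto simp: j_def)
    have "Suc j < T" using i j by auto
    then show "Y yy (i - 1) (real i - 1) = g (Y yy (i - 1 - 1) (real i - 1)) (yy (i - 1))"
    proof -
      have r: "real i - 1 = real (Suc j)" using j by simp
      show ?thesis unfolding r using S_a[OF \<open>Suc j < T\<close>] j by (simp add: YS del: of_nat_Suc)
    qed
  qed
  have arc_k: "continuous_on {real k..real k + 1} (xs (Suc k)) \<and>
     (\<forall>t\<in>{real k..real k + 1}. ((\<lambda>s. f (xs (Suc k) s) (u s)) has_integral (xs (Suc k) t - xs (Suc k) (real k))) {real k..t})"
    if xs: "hybrid_arcs f g T x0 u yy xs" and k: "k < T" for xs yy k
  proof -
    have r1: "real (Suc k) - 1 = real k" by simp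
    have r2: "real (Suc k) = real k + 1" by simp
    have "Suc k \<in> {1..T}" using k by auto
    then have A: "continuous_on {real (Suc k) - 1..real (Suc k)} (xs (Suc k)) \<and>
        (\<forall>t\<in>{real (Suc k) - 1..real (Suc k)}.
           ((\<lambda>s. f (xs (Suc k) s) (u s)) has_integral (xs (Suc k) t - xs (Suc k) (real (Suc k) - 1))) {real (Suc k) - 1..t})"
      using xs unfolding hybrid_arcs_def by blast
    show ?thesis using A unfolding r1 unfolding r2 .
  qed
  have uniq: "\<forall>k<T. \<forall>s\<in>{real k..real k + 1}. xs (Suc k) s = Y yy k s"
    if xs: "hybrid_arcs f g T x0 u yy xs" for xs yy
  proof (intro allI impI)
    fix k assume "k < T"
    then show "\<forall>s\<in>{real k..real k + 1}. xs (Suc k) s = Y yy k s"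
    proof (induction k)
      case 0
      have "xs 1 0 = x0" by (rule conjunct1[OF conjunct2[OF xs[unfolded hybrid_arcs_def]]])
      then have init: "xs (Suc 0) (real 0) = x0" by simp
      note A = arc_k[OF xs 0]
      show ?case
      proof
        fix s assume s: "s \<in> {real 0..real 0 + 1}"
        have "xs (Suc 0) s = S 0 x0 s"
          by (rule S_uniq[OF 0 conjunct1[OF A] init conjunct2[OF A] s])
        then show "xs (Suc 0) s = Y yy 0 s" by (simp only: Y0)
      qed
    next
      case (Suc k)
      have "\<forall>s\<in>{real k..real k + 1}. xs (Suc k) s = Y yy k s" using Suc.IH Suc.prems by simp
      then have IH: "xs (Suc k) (real (Suc k)) = Y yy k (real (Suc k))" by simp
      have i: "Suc (Suc k) \<in> {1..T}" "Suc (Suc k) \<in> {2..T}" using Suc by auto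
      have "xs (Suc (Suc k)) (real (Suc (Suc k)) - 1) = g (xs (Suc (Suc k) - 1) (real (Suc (Suc k)) - 1)) (yy (Suc (Suc k) - 1))"
        by (rule bspec[OF conjunct2[OF conjunct2[OF xs[unfolded hybrid_arcs_def]]] i(2)])
      moreover have "real (Suc (Suc k)) - 1 = real (Suc k)" by simp
      ultimately have init: "xs (Suc (Suc k)) (real (Suc k)) = g (Y yy k (real (Suc k))) (yy (Suc k))"
        using IH by simp
      note A = arc_k[OF xs Suc.prems]
      show ?case
      proof
        fix s assume s: "s \<in> {real (Suc k)..real (Suc k) + 1}"
        have "xs (Suc (Suc k)) s = S (Suc k) (g (Y yy k (real (Suc k))) (yy (Suc k))) s"
          by (rule S_uniq[OF Suc.prems conjunct1[OF A] init conjunct2[OF A] s])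
        then show "xs (Suc (Suc k)) s = Y yy (Suc k) s" by (simp only: YS)
      qed
    qed
  qed
  have k_facts: "nat \<lfloor>t\<rfloor> < T \<and> real (nat \<lfloor>t\<rfloor>) \<le> t \<and> t \<le> real (nat \<lfloor>t\<rfloor>) + 1" if tT: "t \<noteq> real T"
  proof -
    have t0: "0 \<le> t" "t < real T" using t_in tT by auto
    have fl0: "0 \<le> \<lfloor>t\<rfloor>" using t0 by simp
    have rk: "real (nat \<lfloor>t\<rfloor>) = of_int \<lfloor>t\<rfloor>" using fl0 by simp
    have fc: "of_int \<lfloor>t\<rfloor> \<le> t" "t < of_int \<lfloor>t\<rfloor> + 1" by linarith+
    have "\<lfloor>t\<rfloor> < int T" using t0 by linarith
    then have "nat \<lfloor>t\<rfloor> < T" using fl0 by linarith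
    then show ?thesis using rk fc by simp
  qed
  have state_eq: "hybrid_state_of g T yy xs t = V yy" if xs: "hybrid_arcs f g T x0 u yy xs" for xs yy
  proof (cases "t = real T")
    case True
    obtain m where m: "T = Suc m" using T_pos by (cases T) auto
    have "xs (Suc m) (real T) = Y yy m (real T)"
      by (rule uniq[OF xs, rule_format, of m "real T"]) (use m in simp)+
    moreover have "hybrid_state_of g T yy xs t = g (xs T (real T)) (yy T)"
      unfolding hybrid_state_of_def using True by simp
    moreover have "V yy = g (Y yy (T - 1) (real T)) (yy T)"
      unfolding V_def hybrid_state_of_def using True by simp
    ultimately show ?thesis using m by simp
  next
    case False
    define k where "k = nat \<lfloor>t\<rfloor>"
    have k: "k < T" "real k \<le> t" "t \<le> real k + 1" using k_facts[OF False] unfolding k_def by auto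
    have "xs (Suc k) t = Y yy k t"
      by (rule uniq[OF xs, rule_format, of k t]) (use k in simp)+
    moreover have "hybrid_state_of g T yy xs t = xs (Suc k) t"
      unfolding hybrid_state_of_def k_def using False by simp
    moreover have "V yy = Y yy k t"
      unfolding V_def hybrid_state_of_def k_def using False by simp
    ultimately show ?thesis by simp
  qed
  have sol_eq: "hybrid_solution f g T x0 u yy t = V yy" for yy
    unfolding hybrid_solution_def
  proof (rule the_equality)
    show "\<exists>xs. hybrid_arcs f g T x0 u yy xs \<and> V yy = hybrid_state_of g T yy xs t"
      by (rule exI[of _ "\<lambda>i. Y yy (i - 1)"], rule conjI[OF arcs]) (simp add: V_def)
    fix v assume "\<exists>xs. hybrid_arcs f g T x0 u yy xs \<and> v = hybrid_state_of g T yy xs t"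
    then obtain xs where "hybrid_arcs f g T x0 u yy xs" "v = hybrid_state_of g T yy xs t" by blast
    then show "v = V yy" using state_eq by simp
  qed
  have gc: "\<exists>d>0. \<forall>q. dist q p < d \<longrightarrow> dist (g (fst q) (snd q)) (g (fst p) (snd p)) < e" if e0: "e > 0" for p e
  proof -
    have "\<forall>x\<in>UNIV. \<forall>e>0. \<exists>d>0. \<forall>x'\<in>UNIV. dist x' x < d \<longrightarrow> dist ((\<lambda>(x, y). g x y) x') ((\<lambda>(x, y). g x y) x) < e"
      using g_cont unfolding continuous_on_iff .
    then obtain d where "d > 0" "\<forall>x'. dist x' p < d \<longrightarrow> dist ((\<lambda>(x, y). g x y) x') ((\<lambda>(x, y). g x y) p) < e"
      using e0 by blast
    then show ?thesis by (intro exI[of _ d]) (simp add: case_prod_beta)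
  qed
  have pair_dist: "dist (p1, q1) (p2, q2) \<le> dist p1 p2 + dist q1 q2" for p1 p2 :: "real^'nx" and q1 q2 :: "real^'ny"
    unfolding dist_Pair_Pair using sqrt_sum_squares_le_sum_abs[of "dist p1 p2" "dist q1 q2"] by simp
  have gstep: "\<exists>\<delta>>0. \<forall>y'. (\<forall>j\<in>{1..T}. dist (y' j) (y j) < \<delta>) \<longrightarrow>
      dist (g (Y y' k (real (Suc k))) (y' (Suc k))) (g (Y y k (real (Suc k))) (y (Suc k))) < e"
    if IH: "\<forall>e>0. \<exists>\<delta>>0. \<forall>y'. (\<forall>j\<in>{1..T}. dist (y' j) (y j) < \<delta>) \<longrightarrow> dist (Y y' k (real (Suc k))) (Y y k (real (Suc k))) < e"
      and e: "e > 0" and kT: "Suc k \<le> T" for k e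
  proof -
    obtain \<eta> where \<eta>: "\<eta> > 0" "\<And>q. dist q (Y y k (real (Suc k)), y (Suc k)) < \<eta> \<Longrightarrow>
        dist (g (fst q) (snd q)) (g (Y y k (real (Suc k))) (y (Suc k))) < e"
      using gc[OF e, of "(Y y k (real (Suc k)), y (Suc k))"] by auto
    obtain \<delta>1 where \<delta>1: "\<delta>1 > 0" "\<And>y'. (\<forall>j\<in>{1..T}. dist (y' j) (y j) < \<delta>1) \<Longrightarrow>
        dist (Y y' k (real (Suc k))) (Y y k (real (Suc k))) < \<eta> / 2"
      using IH \<eta>(1) by (meson half_gt_zero)
    show ?thesis
    proof (intro exI[of _ "min \<delta>1 (\<eta> / 2)"] conjI allI impI)
      show "min \<delta>1 (\<eta> / 2) > 0" using \<delta>1 \<eta> by simp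
      fix y' assume y': "\<forall>j\<in>{1..T}. dist (y' j) (y j) < min \<delta>1 (\<eta> / 2)"
      have "dist (Y y' k (real (Suc k))) (Y y k (real (Suc k))) < \<eta> / 2" using y' \<delta>1 by auto
      moreover have "dist (y' (Suc k)) (y (Suc k)) < \<eta> / 2" using y' kT by auto
      ultimately have "dist (Y y' k (real (Suc k)), y' (Suc k)) (Y y k (real (Suc k)), y (Suc k)) < \<eta>"
        using pair_dist[of "Y y' k (real (Suc k))" "y' (Suc k)" "Y y k (real (Suc k))" "y (Suc k)"] by linarith
      from \<eta>(2)[OF this] show "dist (g (Y y' k (real (Suc k))) (y' (Suc k))) (g (Y y k (real (Suc k))) (y (Suc k))) < e"
        by simp
    qed
  qed
  have cont: "\<forall>s\<in>{real k..real k + 1}. \<forall>e>0. \<exists>\<delta>>0. \<forall>y'. (\<forall>j\<in>{1..T}. dist (y' j) (y j) < \<delta>) \<longrightarrow>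
      dist (Y y' k s) (Y y k s) < e" if "k < T" for k
    using that
  proof (induction k)
    case 0
    show ?case by (auto simp: Y0 intro!: exI[of _ 1])
  next
    case (Suc k)
    show ?case
    proof (intro ballI allI impI)
      fix s e assume s: "s \<in> {real (Suc k)..real (Suc k) + 1}" and e: "(e::real) > 0"
      have IH: "\<forall>e>0. \<exists>\<delta>>0. \<forall>y'. (\<forall>j\<in>{1..T}. dist (y' j) (y j) < \<delta>) \<longrightarrow> dist (Y y' k (real (Suc k))) (Y y k (real (Suc k))) < e"
        using Suc by auto
      obtain \<delta> where \<delta>: "\<delta> > 0" "\<And>y'. (\<forall>j\<in>{1..T}. dist (y' j) (y j) < \<delta>) \<Longrightarrow>
          dist (g (Y y' k (real (Suc k))) (y' (Suc k))) (g (Y y k (real (Suc k))) (y (Suc k))) < e / C"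
        using gstep[OF IH, of "e / C"] e Cpos Suc(2) by auto
      show "\<exists>\<delta>>0. \<forall>y'. (\<forall>j\<in>{1..T}. dist (y' j) (y j) < \<delta>) \<longrightarrow> dist (Y y' (Suc k) s) (Y y (Suc k) s) < e"
      proof (intro exI[of _ \<delta>] conjI allI impI)
        fix y' assume y': "\<forall>j\<in>{1..T}. dist (y' j) (y j) < \<delta>"
        have "dist (Y y' (Suc k) s) (Y y (Suc k) s) \<le> C * dist (g (Y y' k (real (Suc k))) (y' (Suc k))) (g (Y y k (real (Suc k))) (y (Suc k)))"
          unfolding YS by (rule S_lip[OF Suc(2) s])
        also have "\<dots> < C * (e / C)" using \<delta>(2)[OF y'] Cpos by (intro mult_strict_left_mono) auto
        finally show "dist (Y y' (Suc k) s) (Y y (Suc k) s) < e" using Cpos by simp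
      qed (use \<delta> in auto)
    qed
  qed
  have "\<exists>\<delta>>0. \<forall>y'. (\<forall>j\<in>{1..T}. dist (y' j) (y j) < \<delta>) \<longrightarrow> dist (V y') (V y) < \<epsilon>"
  proof (cases "t = real T")
    case True
    obtain k where kT: "T = Suc k" using T_pos by (cases T) auto
    have IH: "\<forall>e>0. \<exists>\<delta>>0. \<forall>y'. (\<forall>j\<in>{1..T}. dist (y' j) (y j) < \<delta>) \<longrightarrow> dist (Y y' k (real (Suc k))) (Y y k (real (Suc k))) < e"
      using cont[of k] kT by auto
    show ?thesis using gstep[OF IH eps] kT True unfolding V_def hybrid_state_of_def by simp
  next
    case False
    define k where "k = nat \<lfloor>t\<rfloor>"
    have k: "k < T" "real k \<le> t" "t \<le> real k + 1" using t_in False unfolding k_def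
      by (auto simp: le_nat_iff floor_less_iff) (linarith+)
    show ?thesis using cont[OF k(1)] k eps False unfolding V_def hybrid_state_of_def
      by (simp add: k_def[symmetric])
  qed
  then show "\<exists>\<delta>>0. \<forall>y'. (\<forall>i\<in>{1..T}. dist (y' i) (y i) < \<delta>) \<longrightarrow>
            dist (hybrid_solution f g T x0 u y' t) (hybrid_solution f g T x0 u y t) < \<epsilon>"
    by (simp add: sol_eq)
qed

end
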